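(* Let $S_1,S_2\in\mathbb S^{d\times d}$ and let $\Sigma_1,\Sigma_2$ be symmetric $d\times d$ matrices with $0\prec\sigma_{i,d}I_d\preceq\Sigma_i\preceq\sigma_{i,1}I_d$ for $i=1,2$. Then $$\langle\Sigma_1(S_1-S_2)\Sigma_2,S_1-S_2\rangle\ \ge\ \frac{\sigma_{1,1}\sigma_{2,1}\sigma_{1,d}\sigma_{2,d}}{\sigma_{1,1}\sigma_{2,1}+\sigma_{1,d}\sigma_{2,d}}\|S_1-S_2\|_F^2+\frac{\|\Sigma_1(S_1-S_2)\Sigma_2+\Sigma_2(S_1-S_2)\Sigma_1\|_F^2}{4(\sigma_{1,1}\sigma_{2,1}+\sigma_{1,d}\sigma_{2,d})}.$$
   Context: $\mathbb S^{d\times d}$ is the set of symmetric $d\times d$ matrices, $\langle A,B\rangle=\mathrm{tr}(A^{\mathrm T}B)$, $\|\cdot\|_F$ the Frobenius norm, and $A\preceq B$ means $B-A$ is positive semidefinite. *)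

theory Defs
  imports "HOL-Analysis.Analysis"
begin

definition symmetric_mat :: "real^'n^'n \<Rightarrow> bool" where
  "symmetric_mat A \<longleftrightarrow> transpose A = A"

definition psd :: "real^'n^'n \<Rightarrow> bool" where
  "psd M \<longleftrightarrow> symmetric_mat M \<and> (\<forall>x. 0 \<le> x \<bullet> (M *v x))"

definition loewner_le :: "real^'n^'n \<Rightarrow> real^'n^'n \<Rightarrow> bool" where
  "loewner_le A B \<longleftrightarrow> psd (B - A)"

definition frob_inner :: "real^'n^'n \<Rightarrow> real^'n^'n \<Rightarrow> real" where
  "frob_inner A B = trace (transpose A ** B)"

definition frob_norm :: "real^'n^'n \<Rightarrow> real" where
  "frob_norm A = sqrt (frob_inner A A)"

end

theory Submission
  imports Defs
begin

lemma frob_inner_eq: "frob_inner A B = A \<bullet> B"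
proof -
  have "frob_inner A B = (\<Sum>i\<in>UNIV. \<Sum>k\<in>UNIV. A$k$i * B$k$i)"
    unfolding frob_inner_def trace_def matrix_matrix_mult_def transpose_def by simp
  also have "\<dots> = (\<Sum>k\<in>UNIV. \<Sum>i\<in>UNIV. A$k$i * B$k$i)" by (rule sum.swap)
  also have "\<dots> = A \<bullet> B" by (simp add: inner_vec_def)
  finally show ?thesis .
qed

lemma frob_norm_sq: "(frob_norm A)^2 = A \<bullet> A"
  unfolding frob_norm_def frob_inner_eq by simp

lemma mm_add_r: "((A::real^'n^'m) + B) ** C = A ** C + B ** C"
  by (vector matrix_matrix_mult_def sum.distrib[symmetric] field_simps)
lemma mm_diff_r: "((A::real^'n^'m) - B) ** C = A ** C - B ** C"
  by (vector matrix_matrix_mult_def sum_subtractf[symmetric] field_simps)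
lemma mm_diff_l: "(A::real^'n^'m) ** (B - C) = A ** B - A ** C"
  by (vector matrix_matrix_mult_def sum_subtractf[symmetric] field_simps)
lemma mat_scale: "(mat c :: real^'n^'n) = c *\<^sub>R mat 1"
  by (simp add: vec_eq_iff mat_def)
lemma mat_mm_l: "mat c ** (A::real^'m^'n) = c *\<^sub>R A"
  by (metis mat_scale matrix_mul_lid scalar_matrix_assoc)
lemma mat_mm_r: "(A::real^'m^'n) ** mat c = c *\<^sub>R A"
  by (metis mat_scale matrix_mul_rid matrix_scalar_ac)
lemma mat_mv: "mat c *v (x::real^'n) = c *\<^sub>R x"
  by (metis mat_scale matrix_vector_mul_lid scaleR_matrix_vector_assoc)

lemma transpose_diff: "transpose ((A::real^'n^'m) - B) = transpose A - transpose B"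
  by (simp add: vec_eq_iff transpose_def)
lemma transpose_add: "transpose ((A::real^'n^'m) + B) = transpose A + transpose B"
  by (simp add: vec_eq_iff transpose_def)

lemma sym_entry: "symmetric_mat P \<Longrightarrow> P$i$j = P$j$i"
  unfolding symmetric_mat_def by (metis transpose_def vec_lambda_beta)

lemma sym_form: "symmetric_mat P \<Longrightarrow> y \<bullet> (P *v x) = x \<bullet> (P *v y)"
  unfolding symmetric_mat_def
  by (metis dot_lmul_matrix inner_commute transpose_matrix_vector)

lemma quad_cs:
  fixes p q r :: real
  assumes h: "\<And>l. 0 \<le> p + 2*l*q + l^2*r" and r: "0 \<le> r"
  shows "q^2 \<le> p*r"
proof (cases "r = 0")
  case True
  have "q = 0"
  proof (rule ccontr)
    assume q: "q \<noteq> 0"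
    have "0 \<le> p + 2*(-(p+1)/(2*q))*q + (-(p+1)/(2*q))^2*r" by (rule h)
    with q True show False by (simp add: field_simps)
  qed
  then show ?thesis using True by simp
next
  case False
  hence rp: "r > 0" using r by simp
  have "0 \<le> p + 2*(-q/r)*q + (-q/r)^2*r" by (rule h)
  hence "0 \<le> p - q^2/r" using rp by (simp add: field_simps power2_eq_square)
  thus ?thesis using rp by (simp add: field_simps)
qed

lemma psd_cs:
  assumes "psd P"
  shows "(x \<bullet> (P *v y))^2 \<le> (x \<bullet> (P *v x)) * (y \<bullet> (P *v y))"
proof (rule quad_cs)
  have sym: "symmetric_mat P" and pos: "\<And>z. 0 \<le> z \<bullet> (P *v z)" using assms by (auto simp: psd_def)
  fix l :: real
  have "0 \<le> (x + l *\<^sub>R y) \<bullet> (P *v (x + l *\<^sub>R y))" by (rule pos)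
  also have "\<dots> = x \<bullet> (P *v x) + 2*l*(x \<bullet> (P *v y)) + l^2*(y \<bullet> (P *v y))"
    using sym_form[OF sym, of y x]
    by (simp add: matrix_vector_right_distrib inner_add_left inner_add_right power2_eq_square algebra_simps)
  finally show "0 \<le> x \<bullet> (P *v x) + 2*l*(x \<bullet> (P *v y)) + l^2*(y \<bullet> (P *v y))" .
  show "0 \<le> y \<bullet> (P *v y)" using assms by (simp add: psd_def)
qed

lemma axis_form: "axis i 1 \<bullet> ((P::real^'n^'n) *v axis j 1) = P$i$j"
proof -
  have "(P *v axis j 1) $ k = P$k$j" for k
    by (simp add: matrix_vector_mult_def axis_def if_distrib cong: if_cong)
  moreover have "axis i 1 \<bullet> w = w$i" for w :: "real^'n"
    by (subst inner_axis') simp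
  ultimately show ?thesis by simp
qed

definition outer :: "real^'n \<Rightarrow> real^'n^'n" where
  "outer v = (\<chi> i j. v$i * v$j)"

lemma psd_decomp_aux:
  "\<forall>P::real^'n^'n. psd P \<longrightarrow> card {i. P$i$i \<noteq> 0} = k \<longrightarrow> (\<exists>vs. P = sum_list (map outer vs))"
proof (induction k rule: less_induct)
  case (less k)
  show ?case
  proof (intro allI impI)
    fix P :: "real^'n^'n"
    assume psd: "psd P" and ck: "card {i. P$i$i \<noteq> 0} = k"
    have sym: "symmetric_mat P" and pos: "\<And>z. 0 \<le> z \<bullet> (P *v z)" using psd by (auto simp: psd_def)
    have cs: "(P$i$j)^2 \<le> P$i$i * P$j$j" for i j
      using psd_cs[OF psd, of "axis i 1" "axis j 1"] by (simp add: axis_form)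
    have dpos: "0 \<le> P$i$i" for i using pos[of "axis i 1"] by (simp add: axis_form)
    show "\<exists>vs. P = sum_list (map outer vs)"
    proof (cases "\<forall>i. P$i$i = 0")
      case True
      have "P = 0"
      proof (simp add: vec_eq_iff, intro allI)
        fix i j
        have "(P$i$j)^2 \<le> 0" using cs[of i j] True by simp
        thus "P$i$j = 0" by simp
      qed
      thus ?thesis by (intro exI[of _ "[]"]) simp
    next
      case False
      then obtain i where iz: "P$i$i \<noteq> 0" by auto
      define d where "d = P$i$i"
      have dp: "d > 0" using iz dpos[of i] unfolding d_def by simp
      define v :: "real^'n" where "v = (\<chi> j. P$j$i / sqrt d)"
      define P' where "P' = P - outer v"
      have outv: "outer v $ j $ l = P$j$i * P$l$i / d" for j l
        using dp by (simp add: outer_def v_def real_sqrt_mult[symmetric])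
      have P'e: "P' $ j $ l = P$j$l - P$j$i * P$l$i / d" for j l
        by (simp add: P'_def outv)
      have symP': "symmetric_mat P'"
        unfolding symmetric_mat_def
        by (simp add: vec_eq_iff transpose_def P'e sym_entry[OF sym] mult.commute)
      have posP': "0 \<le> z \<bullet> (P' *v z)" for z
      proof -
        have ov: "outer v *v z = (v \<bullet> z) *\<^sub>R v"
          by (simp add: vec_eq_iff outer_def matrix_vector_mult_def inner_vec_def sum_distrib_left mult_ac)
        have vz: "v \<bullet> z = (z \<bullet> (P *v axis i 1)) / sqrt d"
        proof -
          have "(P *v axis i 1) $ k = P$k$i" for k
            by (simp add: matrix_vector_mult_def axis_def if_distrib cong: if_cong)
          thus ?thesis by (simp add: v_def inner_vec_def sum_divide_distrib mult_ac)
        qed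
        have "(z \<bullet> (P *v axis i 1))^2 \<le> (z \<bullet> (P *v z)) * d"
          using psd_cs[OF psd, of z "axis i 1"] by (simp add: axis_form d_def)
        hence "(v \<bullet> z)^2 \<le> z \<bullet> (P *v z)"
          using dp by (simp add: vz power_divide field_simps)
        moreover have "z \<bullet> (P' *v z) = z \<bullet> (P *v z) - (v \<bullet> z)^2"
          by (simp add: P'_def matrix_vector_mult_diff_rdistrib ov inner_diff_right power2_eq_square inner_commute)
        ultimately show ?thesis by simp
      qed
      have psdP': "psd P'" using symP' posP' by (simp add: psd_def)
      have sub: "{j. P'$j$j \<noteq> 0} \<subset> {j. P$j$j \<noteq> 0}"
      proof
        show "{j. P'$j$j \<noteq> 0} \<subseteq> {j. P$j$j \<noteq> 0}"
        proof
          fix j assume "j \<in> {j. P'$j$j \<noteq> 0}"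
          hence h: "P'$j$j \<noteq> 0" by simp
          show "j \<in> {j. P$j$j \<noteq> 0}"
          proof (rule ccontr)
            assume "j \<notin> {j. P$j$j \<noteq> 0}"
            hence "P$j$j = 0" by simp
            moreover then have "(P$j$i)^2 \<le> 0" using cs[of j i] by simp
            ultimately have "P'$j$j = 0" by (simp add: P'e)
            with h show False by simp
          qed
        qed
        have "P'$i$i = 0" using dp by (simp add: P'e d_def power2_eq_square)
        thus "{j. P'$j$j \<noteq> 0} \<noteq> {j. P$j$j \<noteq> 0}" using iz by auto
      qed
      have "card {j. P'$j$j \<noteq> 0} < k" using psubset_card_mono[OF _ sub] ck by simp
      then obtain vs where "P' = sum_list (map outer vs)" using less psdP' by blast
      hence "P = sum_list (map outer (v # vs))" by (simp add: P'_def algebra_simps)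
      thus ?thesis by blast
    qed
  qed
qed

lemma psd_decomp: "psd (P::real^'n^'n) \<Longrightarrow> \<exists>vs. P = sum_list (map outer vs)"
  using psd_decomp_aux by blast


lemma outer_term:
  assumes "psd (Q::real^'n^'n)"
  shows "0 \<le> (outer v ** (X::real^'n^'n) ** Q) \<bullet> X"
proof -
  have symQ: "symmetric_mat Q" using assms by (simp add: psd_def)
  define u where "u = v v* (X ** Q)"
  define w where "w = v v* X"
  have e1: "outer v ** M = (\<chi> i j. v$i * (v v* M)$j)" for M :: "real^'n^'n"
    by (simp add: vec_eq_iff outer_def matrix_matrix_mult_def vector_matrix_mult_def sum_distrib_left mult_ac)
  have "(\<chi> i j. v$i * u$j) \<bullet> X = (\<Sum>i\<in>UNIV. \<Sum>j\<in>UNIV. v$i*u$j*X$i$j)"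
    by (simp add: inner_vec_def sum_distrib_left)
  also have "\<dots> = (\<Sum>j\<in>UNIV. \<Sum>i\<in>UNIV. v$i*u$j*X$i$j)" by (rule sum.swap)
  also have "\<dots> = u \<bullet> w"
    by (simp add: inner_vec_def w_def vector_matrix_mult_def sum_distrib_left mult_ac)
  finally have e2: "(\<chi> i j. v$i * u$j) \<bullet> X = u \<bullet> w" .
  have "u = w v* Q" by (simp add: u_def w_def vector_matrix_mul_assoc)
  also have "\<dots> = transpose Q *v w" by simp
  also have "\<dots> = Q *v w" using symQ by (simp add: symmetric_mat_def)
  finally have "u = Q *v w" .
  hence "u \<bullet> w = w \<bullet> (Q *v w)" by (simp add: inner_commute)
  also have "\<dots> \<ge> 0" using assms by (simp add: psd_def)
  finally have "0 \<le> u \<bullet> w" .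
  moreover have "(outer v ** X ** Q) = (\<chi> i j. v$i * u$j)"
    using e1[of "X ** Q"] by (simp add: u_def matrix_mul_assoc)
  ultimately show ?thesis using e2 by simp
qed

lemma psd_trace:
  fixes P Q X :: "real^'n^'n"
  assumes "psd P" "psd Q"
  shows "0 \<le> (P ** X ** Q) \<bullet> X"
proof -
  obtain vs where P: "P = sum_list (map outer vs)" using psd_decomp[OF assms(1)] by blast
  have "0 \<le> (sum_list (map outer vs) ** X ** Q) \<bullet> X"
  proof (induction vs)
    case Nil thus ?case by simp
  next
    case (Cons v vs)
    thus ?case using outer_term[OF assms(2), of v X] by (simp add: mm_add_r inner_add_left)
  qed
  thus ?thesis using P by simp
qed

lemma psd_mat: "0 \<le> c \<Longrightarrow> psd (mat c :: real^'n^'n)"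
  by (simp add: psd_def symmetric_mat_def mat_mv)

lemma psd_add: "psd A \<Longrightarrow> psd B \<Longrightarrow> psd ((A::real^'n^'n) + B)"
  by (simp add: psd_def symmetric_mat_def transpose_add matrix_vector_mult_add_rdistrib inner_add_right)

lemma psd_le: "loewner_le A B \<Longrightarrow> psd A \<Longrightarrow> psd (B::real^'n^'n)"
  unfolding loewner_le_def using psd_add[of "B - A" A] by simp

lemma loewner_scalar: "loewner_le (mat c) (mat d :: real^'n^'n) \<Longrightarrow> c \<le> d"
proof -
  assume "loewner_le (mat c) (mat d :: real^'n^'n)"
  hence "0 \<le> axis undefined 1 \<bullet> ((mat d - mat c :: real^'n^'n) *v axis undefined 1)"
    by (simp add: loewner_le_def psd_def)
  thus ?thesis by (simp add: axis_form mat_def)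
qed

lemma loewner_trans: "loewner_le A B \<Longrightarrow> loewner_le B C \<Longrightarrow> loewner_le A (C::real^'n^'n)"
  unfolding loewner_le_def using psd_add[of "C - B" "B - A"] by simp

lemma inner_sa:
  fixes A B X Y :: "real^'n^'n"
  assumes "symmetric_mat A" "symmetric_mat B"
  shows "(A ** X ** B) \<bullet> Y = X \<bullet> (A ** Y ** (B::real^'n^'n))"
proof -
  have "(A ** X ** B) \<bullet> Y = frob_inner (A ** X ** B) Y" by (simp add: frob_inner_eq)
  also have "\<dots> = trace (B ** transpose X ** A ** Y)"
    using assms unfolding frob_inner_def symmetric_mat_def
    by (simp add: matrix_transpose_mul matrix_mul_assoc)
  also have "\<dots> = trace ((transpose X ** A ** Y) ** B)"
    by (metis trace_mul_sym matrix_mul_assoc)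
  also have "\<dots> = frob_inner X (A ** Y ** B)"
    unfolding frob_inner_def by (simp add: matrix_mul_assoc)
  also have "\<dots> = X \<bullet> (A ** Y ** B)" by (simp add: frob_inner_eq)
  finally show ?thesis .
qed

lemma swap_sym:
  fixes A B X :: "real^'n^'n"
  assumes "symmetric_mat A" "symmetric_mat B" "symmetric_mat X"
  shows "(B ** X ** A) \<bullet> X = (A ** X ** B) \<bullet> X"
proof -
  have tA: "transpose A = A" and tB: "transpose B = B" and tX: "transpose X = X"
    using assms by (auto simp: symmetric_mat_def)
  have "(B ** X ** A) \<bullet> X = frob_inner (B ** X ** A) X" by (simp add: frob_inner_eq)
  also have "\<dots> = trace ((A ** X) ** (B ** X))"
    unfolding frob_inner_def matrix_transpose_mul tA tB tX by (simp add: matrix_mul_assoc)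
  also have "\<dots> = trace ((B ** X) ** (A ** X))" by (rule trace_mul_sym)
  also have "\<dots> = frob_inner (A ** X ** B) X"
    unfolding frob_inner_def matrix_transpose_mul tA tB tX by (simp add: matrix_mul_assoc)
  also have "\<dots> = (A ** X ** B) \<bullet> X" by (simp add: frob_inner_eq)
  finally show ?thesis .
qed

lemma bounds:
  fixes A B X :: "real^'n^'n"
  assumes "symmetric_mat A" "symmetric_mat B"
    and "0 < al" "loewner_le (mat al) A" "loewner_le A (mat a)"
    and "0 < be" "loewner_le (mat be) B" "loewner_le B (mat b)"
  shows "al*be*(X \<bullet> X) \<le> (A ** X ** B) \<bullet> X \<and> (A ** X ** B) \<bullet> X \<le> a*b*(X \<bullet> X)"
proof -
  have pA: "psd (A - mat al)" and pa: "psd (mat a - A)" and pB: "psd (B - mat be)" and pb: "psd (mat b - B)"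
    using assms by (auto simp: loewner_le_def)
  have psdA: "psd A" using psd_add[OF pA psd_mat[of al]] assms(3) by simp
  have psdB: "psd B" using psd_add[OF pB psd_mat[of be]] assms(6) by simp
  have "be \<le> b" using loewner_scalar[OF loewner_trans[OF assms(7,8)]] .
  hence b0: "0 \<le> b" using assms(6) by simp
  have I: "psd (mat 1 :: real^'n^'n)" by (rule psd_mat) simp
  have e1: "A ** X ** B - (al*be) *\<^sub>R X = (A - mat al) ** X ** B + al *\<^sub>R (mat 1 ** X ** (B - mat be))"
    by (simp add: mm_diff_r mm_diff_l mat_mm_l mat_mm_r matrix_scalar_ac scalar_matrix_assoc[symmetric] algebra_simps)
  have e2: "(a*b) *\<^sub>R X - A ** X ** B = (mat a - A) ** X ** mat b + A ** X ** (mat b - B)"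
    by (simp add: mm_diff_r mm_diff_l mat_mm_l mat_mm_r matrix_scalar_ac scalar_matrix_assoc[symmetric] algebra_simps)
  have "0 \<le> (A ** X ** B - (al*be) *\<^sub>R X) \<bullet> X"
    unfolding e1 using psd_trace[OF pA psdB, of X] psd_trace[OF I pB, of X] assms(3)
    by (simp add: inner_add_left)
  moreover have "0 \<le> ((a*b) *\<^sub>R X - A ** X ** B) \<bullet> X"
    unfolding e2 using psd_trace[OF pa psd_mat[OF b0], of X] psd_trace[OF psdA pb, of X]
    by (simp add: inner_add_left)
  ultimately show ?thesis by (simp add: inner_diff_left)
qed

lemma op_cs:
  fixes P :: "'a::real_inner \<Rightarrow> 'a"
  assumes lin: "\<And>Y Z l. P (Y + l *\<^sub>R Z) = P Y + l *\<^sub>R P Z"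
    and sym: "\<And>Y Z. P Y \<bullet> Z = Y \<bullet> P Z"
    and pos: "\<And>Y. 0 \<le> P Y \<bullet> Y"
  shows "(P Y \<bullet> Z)^2 \<le> (P Y \<bullet> Y) * (P Z \<bullet> Z)"
proof (rule quad_cs)
  fix l :: real
  have "0 \<le> P (Y + l *\<^sub>R Z) \<bullet> (Y + l *\<^sub>R Z)" by (rule pos)
  also have "\<dots> = P Y \<bullet> Y + 2*l*(P Y \<bullet> Z) + l^2*(P Z \<bullet> Z)"
    using sym[of Z Y] unfolding lin
    by (simp add: inner_add_left inner_add_right power2_eq_square algebra_simps inner_commute[of Y "P Z"] inner_commute[of Z "P Y"])
  finally show "0 \<le> P Y \<bullet> Y + 2*l*(P Y \<bullet> Z) + l^2*(P Z \<bullet> Z)" .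
  show "0 \<le> P Z \<bullet> Z" by (rule pos)
qed

lemma op_bound:
  fixes P :: "'a::real_inner \<Rightarrow> 'a"
  assumes lin: "\<And>Y Z l. P (Y + l *\<^sub>R Z) = P Y + l *\<^sub>R P Z"
    and sym: "\<And>Y Z. P Y \<bullet> Z = Y \<bullet> P Z"
    and pos: "\<And>Y. 0 \<le> P Y \<bullet> Y"
    and bd: "\<And>Y. P Y \<bullet> Y \<le> c * (Y \<bullet> Y)"
    and c: "0 \<le> c"
  shows "P X \<bullet> P X \<le> c * (P X \<bullet> X)"
proof -
  define u where "u = P X \<bullet> P X"
  define t where "t = P X \<bullet> X"
  have t0: "0 \<le> t" using pos unfolding t_def .
  have "u^2 \<le> t * (P (P X) \<bullet> P X)"
    using op_cs[OF lin sym pos, of X "P X"] unfolding u_def t_def .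
  also have "\<dots> \<le> t * (c * u)" using bd[of "P X"] t0 unfolding u_def by (simp add: mult_left_mono)
  finally have h: "u * u \<le> (c * t) * u" by (simp add: power2_eq_square mult_ac)
  show ?thesis
  proof (cases "u = 0")
    case True thus ?thesis using c t0 unfolding u_def t_def by simp
  next
    case False
    hence "u > 0" unfolding u_def by simp
    with h have "u \<le> c * t" by (simp add: mult_le_cancel_right)
    thus ?thesis unfolding u_def t_def .
  qed
qed

theorem lemmaE:
  fixes S1 S2 Sig1 Sig2 :: "real^'n^'n"
    and s11 s1d s21 s2d :: real
  assumes "symmetric_mat S1" and "symmetric_mat S2"
    and "symmetric_mat Sig1" and "symmetric_mat Sig2"
    and "0 < s1d" and "loewner_le (mat s1d) Sig1" and "loewner_le Sig1 (mat s11)"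
    and "0 < s2d" and "loewner_le (mat s2d) Sig2" and "loewner_le Sig2 (mat s21)"
  shows "frob_inner (Sig1 ** (S1 - S2) ** Sig2) (S1 - S2) \<ge>
           (s11 * s21 * s1d * s2d) / (s11 * s21 + s1d * s2d) * (frob_norm (S1 - S2))\<^sup>2
           + (frob_norm (Sig1 ** (S1 - S2) ** Sig2 + Sig2 ** (S1 - S2) ** Sig1))\<^sup>2
             / (4 * (s11 * s21 + s1d * s2d))"
proof -
  define X where "X = S1 - S2"
  define M where "M = s11 * s21"
  define m where "m = s1d * s2d"
  have symX: "symmetric_mat X"
    using assms(1,2) unfolding X_def symmetric_mat_def by (simp add: transpose_diff)
  have a1: "s1d \<le> s11" using loewner_scalar[OF loewner_trans[OF assms(6,7)]] .
  have a2: "s2d \<le> s21" using loewner_scalar[OF loewner_trans[OF assms(9,10)]] .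
  have m0: "0 < m" unfolding m_def using assms(5,8) by simp
  have mM: "m \<le> M" unfolding m_def M_def using a1 a2 assms(5,8)
    by (meson less_imp_le mult_mono order_trans)
  define T where "T = (\<lambda>Y. (1/2::real) *\<^sub>R (Sig1 ** Y ** Sig2 + Sig2 ** Y ** Sig1))"
  define P where "P = (\<lambda>Y. T Y - m *\<^sub>R Y)"
  have hT: "m * (Y \<bullet> Y) \<le> T Y \<bullet> Y \<and> T Y \<bullet> Y \<le> M * (Y \<bullet> Y)" for Y
  proof -
    have b1: "s1d* s2d*(Y \<bullet> Y) \<le> (Sig1 ** Y ** Sig2) \<bullet> Y \<and> (Sig1 ** Y ** Sig2) \<bullet> Y \<le> s11* s21*(Y \<bullet> Y)"
      by (rule bounds) (use assms in auto)
    have b2: "s2d* s1d*(Y \<bullet> Y) \<le> (Sig2 ** Y ** Sig1) \<bullet> Y \<and> (Sig2 ** Y ** Sig1) \<bullet> Y \<le> s21* s11*(Y \<bullet> Y)"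
      by (rule bounds) (use assms in auto)
    have "T Y \<bullet> Y = ((Sig1 ** Y ** Sig2) \<bullet> Y + (Sig2 ** Y ** Sig1) \<bullet> Y) / 2"
      by (simp add: T_def inner_add_left)
    thus ?thesis using b1 b2 unfolding m_def M_def by (simp add: mult_ac)
  qed
  have linT: "T (Y + l *\<^sub>R Z) = T Y + l *\<^sub>R T Z" for Y Z l
    by (simp add: T_def matrix_add_ldistrib mm_add_r matrix_scalar_ac scalar_matrix_assoc[symmetric] algebra_simps)
  have symT: "T Y \<bullet> Z = Y \<bullet> T Z" for Y Z
    by (simp add: T_def inner_add_left inner_add_right inner_sa[OF assms(3,4)] inner_sa[OF assms(4,3)])
  have linP: "P (Y + l *\<^sub>R Z) = P Y + l *\<^sub>R P Z" for Y Z l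
    by (simp add: P_def linT algebra_simps)
  have symP: "P Y \<bullet> Z = Y \<bullet> P Z" for Y Z
    by (simp add: P_def inner_diff_left inner_diff_right symT)
  have posP: "0 \<le> P Y \<bullet> Y" for Y
    using hT[of Y] by (simp add: P_def inner_diff_left)
  have bdP: "P Y \<bullet> Y \<le> (M - m) * (Y \<bullet> Y)" for Y
    using hT[of Y] by (simp add: P_def inner_diff_left algebra_simps)
  have key: "P X \<bullet> P X \<le> (M - m) * (P X \<bullet> X)"
    by (rule op_bound[OF linP symP posP bdP]) (use mM in simp)
  define t where "t = (Sig1 ** X ** Sig2) \<bullet> X"
  define n where "n = X \<bullet> X"
  define z where "z = T X \<bullet> T X"
  have tT: "T X \<bullet> X = t"
    using swap_sym[OF assms(3,4) symX] by (simp add: T_def t_def inner_add_left)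
  have Xt: "X \<bullet> T X = t" using tT by (simp add: inner_commute)
  have "P X \<bullet> P X = z - 2*m*t + m^2*n"
    by (simp add: P_def z_def n_def inner_diff_left inner_diff_right tT Xt power2_eq_square algebra_simps)
  moreover have "P X \<bullet> X = t - m*n" by (simp add: P_def n_def inner_diff_left tT)
  ultimately have ineq: "z - 2*m*t + m^2*n \<le> (M - m) * (t - m*n)" using key by simp
  have Zeq: "Sig1 ** X ** Sig2 + Sig2 ** X ** Sig1 = 2 *\<^sub>R T X" by (simp add: T_def)
  have nz: "(frob_norm (Sig1 ** X ** Sig2 + Sig2 ** X ** Sig1))\<^sup>2 = 4 * z"
    unfolding frob_norm_sq Zeq z_def by simp
  have nx: "(frob_norm X)\<^sup>2 = n" unfolding frob_norm_sq n_def ..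
  have lhs: "frob_inner (Sig1 ** X ** Sig2) X = t" by (simp add: frob_inner_eq t_def)
  have pos: "0 < M + m" using m0 mM by simp
  have main: "M * m * n + z \<le> (M + m) * t" using ineq by (simp add: algebra_simps power2_eq_square)
  have "(s11 * s21 * s1d * s2d) / (s11 * s21 + s1d * s2d) * n + 4 * z / (4 * (s11 * s21 + s1d * s2d))
        = (M * m * n + z) / (M + m)"
  proof -
    have e1: "s11 * s21 * s1d * s2d = M * m" and e2: "s11 * s21 + s1d * s2d = M + m"
      unfolding M_def m_def by (simp_all add: mult_ac)
    have f1: "4*z/(4*(M+m)) = z/(M+m)" by (rule mult_divide_mult_cancel_left) simp
    have f2: "M*m/(M+m)*n = M*m*n/(M+m)" by simp
    show ?thesis unfolding e1 e2 f1 f2 by (simp add: add_divide_distrib)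
  qed
  also have "\<dots> \<le> t" using main pos by (simp add: divide_le_eq mult.commute)
  finally show ?thesis unfolding X_def[symmetric] nz nx lhs .
qed

end
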